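(* Let $\mathcal X,\mathcal Y,\mathcal Z$ be finite sets, $\rho$ a probability distribution on $\mathcal X$, $\mathsf E:\mathcal Y\to\mathcal Z$ a map, $\pi_0$ a reference policy with $\pi_0(y\mid x)>0$ for all $x,y$, and $\beta>0$. Let $\mathcal R:\Delta(\mathcal Z)\to\mathbb R$ be convex and lower semi-continuous. Then: (1) For every policy $\pi\in\Delta(\mathcal Y)^{\mathcal X}$, $$\mathcal J(\pi)=\sup_{\mathsf q}\ \mathcal G(\pi,\mathsf q),$$ where the supremum ranges over all families $\mathsf q=(\mathsf q(\cdot\mid x))_{x\in\mathcal X}$ with each $\mathsf q(\cdot\mid x)$ in the interior of $\Delta(\mathcal Z)$. Consequently, for every nonempty set $\Pi\subseteq\Delta(\mathcal Y)^{\mathcal X}$, $\inf_{\pi\in\Pi}\mathcal J(\pi)=\inf_{\pi\in\Pi}\sup_{\mathsf q}\mathcal G(\pi,\mathsf q)$. (2) For a fixed target family $\mathsf q$ (each $\mathsf q(\cdot\mid x)$ in the interior of $\Delta(\mathcal Z)$), define $\tilde{\mathsf q}(y\mid x)=\pi_0(y\mid x)\,\mathsf q(\mathsf E(y)\mid x)/C_x$ with $C_x=\sum_{y'}\pi_0(y'\mid x)\mathsf q(\mathsf E(y')\mid x)$. Then for every $\pi$, $$\mathcal G(\pi,\mathsf q)=\beta\,\mathbb E_{x\sim\rho}\big[\mathrm{D_{KL}}(\pi(\cdot\mid x)\,\|\,\tilde{\mathsf q}(\cdot\mid x))\big]+\kappa(\mathsf q),$$ where $\kappa(\mathsf q)$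 does not depend on $\pi$. In particular, over $\Pi=\Delta(\mathcal Y)^{\mathcal X}$, the minimizer of $\pi\mapsto\mathcal G(\pi,\mathsf q)$ is $\pi^*(y\mid x)\propto\pi_0(y\mid x)\,\mathsf q(\mathsf E(y)\mid x)$, unique on every $x$ with $\rho(x)>0$.
   Context: A policy $\pi\in\Delta(\mathcal Y)^{\mathcal X}$ is a family of conditional distributions $\pi(\cdot\mid x)$ on $\mathcal Y$. Its induced answer marginal is $\nu_\pi(z\mid x)=\sum_{y\in\mathsf E^{-1}(z)}\pi(y\mid x)$. The primal objective is $\mathcal J(\pi)=\mathbb E_{x\sim\rho}\big[\mathcal R(\nu_\pi(\cdot\mid x))+\beta\,\mathrm{D_{KL}}(\pi(\cdot\mid x)\|\pi_0(\cdot\mid x))\big]$. The Fenchel conjugate is $\mathcal R^*(u)=\sup_{\nu\in\Delta(\mathcal Z)}\{\langle\nu,u\rangle-\mathcal R(\nu)\}$ for $u\in\mathbb R^{\mathcal Z}$, and for $\mathsf q$ in the interior of $\Delta(\mathcal Z)$ set $\Psi(\mathsf q)=\mathcal R^*(-\beta\log\mathsf q)$ (log taken coordinatewise). The game objective is $$\mathcal G(\pi,\mathsf q)=\mathbb E_{x\sim\rho}\Big[\beta\,\mathrm{D_{KL}}(\pi(\cdot\mid x)\|\pi_0(\cdot\mid x))-\beta\,\mathbb E_{y\sim\pi(\cdot\mid x)}[\log\mathsf q(\mathsf E(y)\mid x)]-\Psi(\mathsf q(\cdot\mid x))\Big].$$ *)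

theory Defs
  imports "HOL-Analysis.Analysis"
begin

definition prob_simplex :: "(real ^ 'z::finite) set" where
  "prob_simplex = {\<nu>. (\<forall>z. \<nu> $ z \<ge> 0) \<and> (\<Sum>z\<in>UNIV. \<nu> $ z) = 1}"

(* (Relative) interior of the prob_simplex: strictly positive distributions *)
definition prob_simplex_int :: "(real ^ 'z::finite) set" where
  "prob_simplex_int = {\<nu>. (\<forall>z. \<nu> $ z > 0) \<and> (\<Sum>z\<in>UNIV. \<nu> $ z) = 1}"

definition lsc_on :: "'a::topological_space set \<Rightarrow> ('a \<Rightarrow> real) \<Rightarrow> bool" where
  "lsc_on S f \<longleftrightarrow> (\<forall>t. closedin (top_of_set S) {v\<in>S. f v \<le> t})"

definition policies :: "('x \<Rightarrow> real ^ 'y::finite) set" where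
  "policies = {\<pi>. \<forall>x. \<pi> x \<in> prob_simplex}"

definition int_families :: "('x \<Rightarrow> real ^ 'z::finite) set" where
  "int_families = {q. \<forall>x. q x \<in> prob_simplex_int}"

definition KL :: "real ^ 'y::finite \<Rightarrow> real ^ 'y \<Rightarrow> real" where
  "KL p q = (\<Sum>y\<in>UNIV. if p $ y = 0 then 0 else p $ y * ln (p $ y / q $ y))"

definition marginal :: "('y::finite \<Rightarrow> 'z::finite) \<Rightarrow> real ^ 'y \<Rightarrow> real ^ 'z" where
  "marginal E p = (\<chi> z. \<Sum>y\<in>{y. E y = z}. p $ y)"

definition fconj :: "(real ^ 'z::finite \<Rightarrow> real) \<Rightarrow> real ^ 'z \<Rightarrow> real" where
  "fconj R u = (SUP \<nu>\<in>prob_simplex. \<nu> \<bullet> u - R \<nu>)"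

definition Psi :: "real \<Rightarrow> (real ^ 'z::finite \<Rightarrow> real) \<Rightarrow> real ^ 'z \<Rightarrow> real" where
  "Psi \<beta> R q = fconj R (\<chi> z. - \<beta> * ln (q $ z))"

definition Jobj :: "('x::finite \<Rightarrow> real) \<Rightarrow> ('y::finite \<Rightarrow> 'z::finite) \<Rightarrow> ('x \<Rightarrow> real ^ 'y)
    \<Rightarrow> real \<Rightarrow> (real ^ 'z \<Rightarrow> real) \<Rightarrow> ('x \<Rightarrow> real ^ 'y) \<Rightarrow> real" where
  "Jobj \<rho> E \<pi>0 \<beta> R \<pi> = (\<Sum>x\<in>UNIV. \<rho> x * (R (marginal E (\<pi> x)) + \<beta> * KL (\<pi> x) (\<pi>0 x)))"

definition Gobj :: "('x::finite \<Rightarrow> real) \<Rightarrow> ('y::finite \<Rightarrow> 'z::finite) \<Rightarrow> ('x \<Rightarrow> real ^ 'y)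
    \<Rightarrow> real \<Rightarrow> (real ^ 'z \<Rightarrow> real) \<Rightarrow> ('x \<Rightarrow> real ^ 'y) \<Rightarrow> ('x \<Rightarrow> real ^ 'z) \<Rightarrow> real" where
  "Gobj \<rho> E \<pi>0 \<beta> R \<pi> q = (\<Sum>x\<in>UNIV. \<rho> x *
      (\<beta> * KL (\<pi> x) (\<pi>0 x)
       - \<beta> * (\<Sum>y\<in>UNIV. \<pi> x $ y * ln (q x $ E y))
       - Psi \<beta> R (q x)))"

definition qtilde :: "('y::finite \<Rightarrow> 'z::finite) \<Rightarrow> ('x \<Rightarrow> real ^ 'y) \<Rightarrow> ('x \<Rightarrow> real ^ 'z) \<Rightarrow> 'x \<Rightarrow> real ^ 'y" where
  "qtilde E \<pi>0 q x = (\<chi> y. \<pi>0 x $ y * q x $ E y / (\<Sum>y'\<in>UNIV. \<pi>0 x $ y' * q x $ E y'))"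

end

theory Submission
  imports Defs
begin


lemma closed_simplex: "closed (prob_simplex :: (real^'z::finite) set)"
proof -
  have "prob_simplex = (\<Inter>z. {\<nu>::real^'z. \<nu> $ z \<ge> 0}) \<inter> {\<nu>. (\<Sum>z\<in>UNIV. \<nu> $ z) = 1}"
    unfolding prob_simplex_def by auto
  moreover have "closed {\<nu>::real^'z. (\<Sum>z\<in>UNIV. \<nu> $ z) = 1}"
    by (intro closed_Collect_eq continuous_intros)
  moreover have "closed {\<nu>::real^'z. \<nu> $ z \<ge> 0}" for z
    by (intro closed_Collect_le continuous_intros)
  ultimately show ?thesis by (metis closed_INT closed_Int)
qed

lemma closed_epi:
  fixes R :: "real^'z::finite \<Rightarrow> real"
  assumes "lsc_on prob_simplex R"
  shows "closed (epigraph prob_simplex R)"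
proof (rule closed_sequential_limits[THEN iffD2], intro allI impI, elim conjE)
  fix x :: "nat \<Rightarrow> (real^'z) \<times> real" and l
  assume xs: "\<forall>n. x n \<in> epigraph prob_simplex R" and lim: "x \<longlonglongrightarrow> l"
  have l1: "(\<lambda>n. fst (x n)) \<longlonglongrightarrow> fst l" using lim by (intro tendsto_intros)
  have l2: "(\<lambda>n. snd (x n)) \<longlonglongrightarrow> snd l" using lim by (intro tendsto_intros)
  have ins: "fst l \<in> prob_simplex"
    using Lim_in_closed_set[OF closed_simplex _ _ l1] xs by (auto simp: epigraph_def)
  have "R (fst l) \<le> snd l"
  proof (rule ccontr)
    assume "\<not> ?thesis"
    define s where "s = (snd l + R (fst l)) / 2"
    have "s > snd l" "s < R (fst l)" using \<open>\<not> _\<close> by (auto simp: s_def)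
    have ev: "eventually (\<lambda>n. snd (x n) < s) sequentially"
      using order_tendstoD(2)[OF l2 \<open>s > snd l\<close>] .
    have cl: "closed {v\<in>prob_simplex. R v \<le> s}"
      using assms closed_simplex closedin_closed_trans unfolding lsc_on_def by blast
    have "eventually (\<lambda>n. fst (x n) \<in> {v\<in>prob_simplex. R v \<le> s}) sequentially"
      using ev proof (rule eventually_mono)
      fix n assume "snd (x n) < s"
      then show "fst (x n) \<in> {v\<in>prob_simplex. R v \<le> s}"
        using xs[rule_format, of n] by (auto simp: epigraph_def)
    qed
    from Lim_in_closed_set[OF cl this _ l1] have "R (fst l) \<le> s" by auto
    with \<open>s < R (fst l)\<close> show False by simp
  qed
  with ins show "l \<in> epigraph prob_simplex R" by (auto simp: epigraph_def)
qed

lemma sep: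
  fixes R :: "real^'z::finite \<Rightarrow> real"
  assumes cv: "convex_on prob_simplex R" and lsc: "lsc_on prob_simplex R"
    and nu: "\<nu> \<in> prob_simplex" and e: "\<epsilon> > 0"
  shows "\<exists>u K. (\<forall>\<mu>\<in>prob_simplex. \<mu> \<bullet> u - R \<mu> \<le> K) \<and> \<nu> \<bullet> u - K > R \<nu> - \<epsilon>"
proof -
  have "(\<nu>, R \<nu> - \<epsilon>) \<notin> epigraph prob_simplex R" using e by (auto simp: epigraph_def)
  from separating_hyperplane_closed_point[OF convex_epigraphI[OF cv] closed_epi[OF lsc] this]
  obtain a b where ab: "a \<bullet> (\<nu>, R \<nu> - \<epsilon>) < b" "\<forall>x\<in>epigraph prob_simplex R. a \<bullet> x > b" by blast
  obtain a1 c where a: "a = (a1, c)" by (cases a)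
  have h1: "a1 \<bullet> \<nu> + c * (R \<nu> - \<epsilon>) < b" using ab(1) a by (simp add: inner_Pair)
  have h2: "\<And>\<mu>. \<mu> \<in> prob_simplex \<Longrightarrow> a1 \<bullet> \<mu> + c * R \<mu> > b"
    using ab(2) a by (force simp: epigraph_def inner_Pair)
  from h2[OF nu] h1 have "c * \<epsilon> > 0" by (simp add: algebra_simps)
  hence c: "c > 0" using e by (simp add: zero_less_mult_iff)
  show ?thesis
  proof (intro exI conjI ballI)
    fix \<mu> :: "real^'z" assume "\<mu> \<in> prob_simplex"
    from h2[OF this] have "b / c < (a1 \<bullet> \<mu>) / c + R \<mu>" using c
      by (simp add: field_simps)
    then show "\<mu> \<bullet> (- (1/c) *\<^sub>R a1) - R \<mu> \<le> - b / c"
      by (simp add: inner_commute)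
  next
    from divide_strict_right_mono[OF h1 c] have "(a1 \<bullet> \<nu>) / c + (R \<nu> - \<epsilon>) < b / c" using c
      by (simp add: add_divide_distrib)
    then show "\<nu> \<bullet> (- (1/c) *\<^sub>R a1) - (- b / c) > R \<nu> - \<epsilon>"
      by (simp add: inner_commute)
  qed
qed


lemma inner_vec_sum: "(\<mu>::real^'z::finite) \<bullet> u = (\<Sum>z\<in>UNIV. \<mu> $ z * u $ z)"
  by (simp add: inner_vec_def)

lemma simplex_le1: "\<mu> \<in> prob_simplex \<Longrightarrow> \<mu> $ z \<le> 1"
  unfolding prob_simplex_def
  by (metis (mono_tags, lifting) finite UNIV_I mem_Collect_eq member_le_sum)

lemma inner_bound:
  assumes "\<mu> \<in> prob_simplex"
  shows "\<bar>\<mu> \<bullet> u\<bar> \<le> (\<Sum>z\<in>UNIV. \<bar>u $ z\<bar>)"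
proof -
  have "\<bar>\<mu> \<bullet> u\<bar> \<le> (\<Sum>z\<in>UNIV. \<bar>\<mu> $ z * u $ z\<bar>)"
    unfolding inner_vec_sum by (rule sum_abs)
  also have "\<dots> \<le> (\<Sum>z\<in>UNIV. \<bar>u $ z\<bar>)"
  proof (rule sum_mono)
    fix z
    have "0 \<le> \<mu> $ z" using assms by (simp add: prob_simplex_def)
    moreover have "\<mu> $ z \<le> 1" using simplex_le1[OF assms] .
    ultimately show "\<bar>\<mu> $ z * u $ z\<bar> \<le> \<bar>u $ z\<bar>"
      by (simp add: abs_mult mult_left_le_one_le)
  qed
  finally show ?thesis .
qed

lemma simplex_nonempty: "(\<chi> z. 1 / real CARD('z::finite)) \<in> (prob_simplex :: (real^'z) set)"
  by (simp add: prob_simplex_def)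

lemma simplex_sum_inner_shift:
  assumes "\<mu> \<in> prob_simplex"
  shows "\<mu> \<bullet> (\<chi> z. u $ z + c) = \<mu> \<bullet> u + c"
proof -
  have "\<mu> \<bullet> (\<chi> z. u $ z + c) = (\<Sum>z\<in>UNIV. \<mu> $ z * u $ z) + c * (\<Sum>z\<in>UNIV. \<mu> $ z)"
    by (simp add: inner_vec_sum algebra_simps sum.distrib sum_distrib_left)
  then show ?thesis using assms by (simp add: prob_simplex_def inner_vec_sum)
qed

definition hq :: "(real^'z::finite \<Rightarrow> real) \<Rightarrow> real \<Rightarrow> real^'z \<Rightarrow> real^'z \<Rightarrow> real" where
  "hq R \<beta> \<nu> q = - \<beta> * (\<Sum>z\<in>UNIV. \<nu> $ z * ln (q $ z)) - Psi \<beta> R q"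

context
  fixes R :: "real^'z::finite \<Rightarrow> real"
  assumes cv: "convex_on prob_simplex R" and lsc: "lsc_on prob_simplex R"
begin

lemma R_lower: "\<exists>L. \<forall>\<mu>\<in>prob_simplex. R \<mu> \<ge> L"
proof -
  obtain u K where uK: "\<forall>\<mu>\<in>prob_simplex. \<mu> \<bullet> u - R \<mu> \<le> K"
    using sep[OF cv lsc simplex_nonempty, of 1] by auto
  show ?thesis
  proof (intro exI ballI)
    fix \<mu> :: "real^'z" assume m: "\<mu> \<in> prob_simplex"
    from uK m inner_bound[OF m, of u] show "R \<mu> \<ge> - K - (\<Sum>z\<in>UNIV. \<bar>u $ z\<bar>)" by auto
  qed
qed

lemma bdd_conj: "bdd_above ((\<lambda>\<mu>. \<mu> \<bullet> u - R \<mu>) ` prob_simplex)"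
proof -
  obtain L where L: "\<forall>\<mu>\<in>prob_simplex. R \<mu> \<ge> L" using R_lower by auto
  show ?thesis
  proof (rule bdd_aboveI2)
    fix \<mu> :: "real^'z" assume m: "\<mu> \<in> prob_simplex"
    from L m inner_bound[OF m, of u] show "\<mu> \<bullet> u - R \<mu> \<le> (\<Sum>z\<in>UNIV. \<bar>u $ z\<bar>) - L" by auto
  qed
qed

lemma fconj_ge: "\<mu> \<in> prob_simplex \<Longrightarrow> \<mu> \<bullet> u - R \<mu> \<le> fconj R u"
  unfolding fconj_def by (rule cSUP_upper[OF _ bdd_conj])

lemma fconj_le: "(\<And>\<mu>. \<mu> \<in> prob_simplex \<Longrightarrow> \<mu> \<bullet> u - R \<mu> \<le> K) \<Longrightarrow> fconj R u \<le> K"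
  unfolding fconj_def using simplex_nonempty by (intro cSUP_least) auto


lemma hq_le:
  assumes "\<nu> \<in> prob_simplex"
  shows "hq R \<beta> \<nu> q \<le> R \<nu>"
proof -
  have "\<nu> \<bullet> (\<chi> z. - \<beta> * ln (q $ z)) - R \<nu> \<le> Psi \<beta> R q"
    unfolding Psi_def by (rule fconj_ge[OF assms])
  moreover have "\<nu> \<bullet> (\<chi> z. - \<beta> * ln (q $ z)) = - \<beta> * (\<Sum>z\<in>UNIV. \<nu> $ z * ln (q $ z))"
    by (simp add: inner_vec_sum sum_distrib_left algebra_simps)
  ultimately show ?thesis unfolding hq_def by linarith
qed

lemma hq_approx:
  assumes nu: "\<nu> \<in> prob_simplex" and e: "\<epsilon> > 0" and b: "\<beta> > 0"
  shows "\<exists>q\<in>prob_simplex_int. hq R \<beta> \<nu> q > R \<nu> - \<epsilon>"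
proof -
  obtain u K where uK: "\<forall>\<mu>\<in>prob_simplex. \<mu> \<bullet> u - R \<mu> \<le> K" and gt: "\<nu> \<bullet> u - K > R \<nu> - \<epsilon>"
    using sep[OF cv lsc nu e] by auto
  define Zs where "Zs = (\<Sum>z\<in>UNIV. exp (- u $ z / \<beta>))"
  have Zpos: "Zs > 0" unfolding Zs_def by (intro sum_pos) auto
  define q where "q = (\<chi> z. exp (- u $ z / \<beta>) / Zs)"
  define c where "c = \<beta> * ln Zs"
  have qint: "q \<in> prob_simplex_int"
    using Zpos by (simp add: prob_simplex_int_def q_def Zs_def flip: sum_divide_distrib)
  have lnq: "- \<beta> * ln (q $ z) = u $ z + c" for z
    using Zpos b by (simp add: q_def c_def ln_div algebra_simps)
  have vec: "(\<chi> z. - \<beta> * ln (q $ z)) = (\<chi> z. u $ z + c)"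
    using lnq by simp
  have "Psi \<beta> R q \<le> K + c"
    unfolding Psi_def vec
  proof (rule fconj_le)
    fix \<mu> :: "real^'z" assume m: "\<mu> \<in> prob_simplex"
    show "\<mu> \<bullet> (\<chi> z. u $ z + c) - R \<mu> \<le> K + c"
      using uK m simplex_sum_inner_shift[OF m] by auto
  qed
  moreover have "- \<beta> * (\<Sum>z\<in>UNIV. \<nu> $ z * ln (q $ z)) = \<nu> \<bullet> u + c"
  proof -
    have "- \<beta> * (\<Sum>z\<in>UNIV. \<nu> $ z * ln (q $ z)) = (\<Sum>z\<in>UNIV. \<nu> $ z * (- \<beta> * ln (q $ z)))"
      by (simp add: sum_distrib_left algebra_simps)
    also have "\<dots> = \<nu> \<bullet> (\<chi> z. u $ z + c)" unfolding inner_vec_sum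
      by (rule sum.cong) (simp_all only: lnq vec_lambda_beta)
    finally show ?thesis using simplex_sum_inner_shift[OF nu] by simp
  qed
  ultimately have "hq R \<beta> \<nu> q \<ge> \<nu> \<bullet> u - K" unfolding hq_def by linarith
  with gt qint show ?thesis by force
qed

end

lemma KL_gibbs:
  assumes p: "p \<in> prob_simplex" and r: "r \<in> prob_simplex" and rpos: "\<forall>y. r $ y > 0"
  shows "KL p r \<ge> 0 \<and> (KL p r = 0 \<longrightarrow> p = r)"
proof -
  define d where "d y = (if p $ y = 0 then r $ y else r $ y - p $ y - p $ y * ln (r $ y / p $ y))" for y
  have pnn: "p $ y \<ge> 0" for y using p by (simp add: prob_simplex_def)
  have dnn: "d y \<ge> 0" for y
  proof (cases "p $ y = 0")
    case True then show ?thesis using rpos by (simp add: d_def less_imp_le)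
  next
    case False
    then have pp: "p $ y > 0" using pnn[of y] by simp
    have "ln (r $ y / p $ y) \<le> r $ y / p $ y - 1" using pp rpos by (intro ln_le_minus_one) simp
    then have "p $ y * ln (r $ y / p $ y) \<le> p $ y * (r $ y / p $ y - 1)" using pp by (simp add: mult_left_mono)
    also have "\<dots> = r $ y - p $ y" using pp by (simp add: field_simps)
    finally show ?thesis using False by (simp add: d_def)
  qed
  have dterm: "d y = r $ y - p $ y + (if p $ y = 0 then 0 else p $ y * ln (p $ y / r $ y))" for y
  proof (cases "p $ y = 0")
    case False
    then have pp: "p $ y > 0" using pnn[of y] by simp
    have "ln (p $ y / r $ y) = - ln (r $ y / p $ y)" using pp rpos by (simp add: ln_div)
    then show ?thesis using False by (simp add: d_def)
  qed (simp add: d_def)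
  have KLd: "KL p r = (\<Sum>y\<in>UNIV. d y)"
    using p r by (simp add: dterm sum.distrib sum_subtractf KL_def prob_simplex_def)
  have "KL p r \<ge> 0" unfolding KLd by (intro sum_nonneg dnn)
  moreover have "p = r" if "KL p r = 0"
  proof -
    have "\<forall>y\<in>UNIV. d y = 0" using that unfolding KLd by (subst sum_nonneg_eq_0_iff[symmetric]) (auto intro: dnn)
    show ?thesis
    proof (rule vec_eq_iff[THEN iffD2], rule allI)
      fix y
      have d0: "d y = 0" using \<open>\<forall>y\<in>UNIV. d y = 0\<close> by simp
      show "p $ y = r $ y"
      proof (cases "p $ y = 0")
        case True then show ?thesis using d0 rpos[rule_format, of y] by (simp add: d_def)
      next
        case False
        then have pp: "p $ y > 0" using pnn[of y] by simp
        have "p $ y * ln (r $ y / p $ y) = r $ y - p $ y"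
          using d0 False by (simp add: d_def)
        then have "ln (r $ y / p $ y) = (r $ y - p $ y) / p $ y" using pp by (simp add: field_simps)
        then have "ln (r $ y / p $ y) = r $ y / p $ y - 1" using pp by (simp add: diff_divide_distrib)
        then have "r $ y / p $ y = 1" using pp rpos by (intro ln_eq_minus_one) auto
        then show ?thesis using pp by (simp add: field_simps)
      qed
    qed
  qed
  ultimately show ?thesis by blast
qed

lemma KL_self: "KL p p = 0"
  unfolding KL_def by (rule sum.neutral) simp

lemma marg_sum:
  fixes E :: "'y::finite \<Rightarrow> 'z::finite"
  shows "(\<Sum>y\<in>UNIV. p $ y * f (E y)) = (\<Sum>z\<in>UNIV. marginal E p $ z * f z)"
proof -
  have "(\<Sum>z\<in>UNIV. marginal E p $ z * f z) = (\<Sum>z\<in>UNIV. \<Sum>y\<in>{y\<in>UNIV. E y = z}. p $ y * f (E y))"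
    by (simp add: marginal_def sum_distrib_right)
  also have "\<dots> = (\<Sum>y\<in>UNIV. p $ y * f (E y))"
    by (rule sum.group) auto
  finally show ?thesis by simp
qed

lemma marg_simplex:
  fixes E :: "'y::finite \<Rightarrow> 'z::finite"
  assumes "p \<in> prob_simplex" shows "marginal E p \<in> prob_simplex"
proof -
  have "(\<Sum>z\<in>UNIV. marginal E p $ z) = (\<Sum>y\<in>UNIV. p $ y)"
    using marg_sum[of p "\<lambda>_. 1" E] by simp
  then show ?thesis using assms
    by (auto simp: prob_simplex_def marginal_def intro!: sum_nonneg)
qed

lemma qtilde_props:
  fixes E :: "'y::finite \<Rightarrow> 'z::finite"
  assumes pi0: "\<forall>y. \<pi>0 x $ y > 0" and q: "q x \<in> prob_simplex_int"
  shows "(\<Sum>y\<in>UNIV. \<pi>0 x $ y * q x $ E y) > 0"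
    and "\<forall>y. qtilde E \<pi>0 q x $ y > 0"
    and "qtilde E \<pi>0 q x \<in> prob_simplex"
proof -
  have qp: "q x $ z > 0" for z using q by (simp add: prob_simplex_int_def)
  show C: "(\<Sum>y\<in>UNIV. \<pi>0 x $ y * q x $ E y) > 0"
    using pi0 qp by (intro sum_pos) auto
  show "\<forall>y. qtilde E \<pi>0 q x $ y > 0"
    using C pi0 qp by (simp add: qtilde_def)
  then show "qtilde E \<pi>0 q x \<in> prob_simplex"
    using C by (simp add: qtilde_def prob_simplex_def less_imp_le flip: sum_divide_distrib)
qed

lemma KL_tilt:
  fixes E :: "'y::finite \<Rightarrow> 'z::finite"
  assumes p: "p \<in> prob_simplex" and pi0: "\<forall>y. \<pi>0 x $ y > 0" and q: "q x \<in> prob_simplex_int"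
  shows "KL p (\<pi>0 x) - (\<Sum>y\<in>UNIV. p $ y * ln (q x $ E y))
       = KL p (qtilde E \<pi>0 q x) - ln (\<Sum>y\<in>UNIV. \<pi>0 x $ y * q x $ E y)"
proof -
  define C where "C = (\<Sum>y\<in>UNIV. \<pi>0 x $ y * q x $ E y)"
  have Cp: "C > 0" using qtilde_props(1)[of \<pi>0 x q E, OF pi0 q] by (simp add: C_def)
  have qp: "q x $ z > 0" for z using q by (simp add: prob_simplex_int_def)
  have pnn: "p $ y \<ge> 0" for y using p by (simp add: prob_simplex_def)
  have tm: "(if p $ y = 0 then 0 else p $ y * ln (p $ y / qtilde E \<pi>0 q x $ y))
     = (if p $ y = 0 then 0 else p $ y * ln (p $ y / \<pi>0 x $ y)) - p $ y * ln (q x $ E y) + p $ y * ln C" for y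
  proof (cases "p $ y = 0")
    case False
    then have pp: "p $ y > 0" using pnn[of y] by simp
    have a: "qtilde E \<pi>0 q x $ y = \<pi>0 x $ y * q x $ E y / C" by (simp add: qtilde_def C_def)
    have eq: "ln (p $ y / (\<pi>0 x $ y * q x $ E y / C)) = ln (p $ y / \<pi>0 x $ y) - ln (q x $ E y) + ln C"
      using pp pi0[rule_format, of y] qp[of "E y"] Cp by (simp add: ln_div ln_mult)
    have "p $ y * ln (p $ y / (\<pi>0 x $ y * q x $ E y / C)) = p $ y * ln (p $ y / \<pi>0 x $ y) - p $ y * ln (q x $ E y) + p $ y * ln C"
      unfolding eq by (simp add: algebra_simps)
    then show ?thesis using False a by simp
  qed simp
  have "KL p (qtilde E \<pi>0 q x) = KL p (\<pi>0 x) - (\<Sum>y\<in>UNIV. p $ y * ln (q x $ E y)) + (\<Sum>y\<in>UNIV. p $ y) * ln C"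
    unfolding KL_def tm by (simp add: sum.distrib sum_subtractf sum_distrib_right)
  then show ?thesis using p by (simp add: prob_simplex_def C_def)
qed


lemma G_rewrite:
  "Gobj \<rho> E \<pi>0 \<beta> R \<pi> q = (\<Sum>x\<in>UNIV. \<rho> x * (\<beta> * KL (\<pi> x) (\<pi>0 x) + hq R \<beta> (marginal E (\<pi> x)) (q x)))"
  unfolding Gobj_def
proof (rule sum.cong[OF refl])
  fix x
  have "(\<Sum>y\<in>UNIV. \<pi> x $ y * ln (q x $ E y)) = (\<Sum>z\<in>UNIV. marginal E (\<pi> x) $ z * ln (q x $ z))"
    by (rule marg_sum)
  then show "\<rho> x * (\<beta> * KL (\<pi> x) (\<pi>0 x) - \<beta> * (\<Sum>y\<in>UNIV. \<pi> x $ y * ln (q x $ E y)) - Psi \<beta> R (q x)) =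
         \<rho> x * (\<beta> * KL (\<pi> x) (\<pi>0 x) + hq R \<beta> (marginal E (\<pi> x)) (q x))"
    by (simp add: hq_def)
qed

lemma part1:
  fixes \<rho> :: "'x::finite \<Rightarrow> real" and E :: "'y::finite \<Rightarrow> 'z::finite"
  assumes rho_nonneg: "\<forall>x. \<rho> x \<ge> 0" and rho_sum: "(\<Sum>x\<in>UNIV. \<rho> x) = 1"
    and beta_pos: "\<beta> > 0"
    and cv: "convex_on prob_simplex R" and lsc: "lsc_on prob_simplex R"
    and pi: "\<pi> \<in> policies"
  shows "Jobj \<rho> E \<pi>0 \<beta> R \<pi> = (SUP q\<in>int_families. Gobj \<rho> E \<pi>0 \<beta> R \<pi> q)"
proof -
  have nus: "marginal E (\<pi> x) \<in> prob_simplex" for x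
    using pi by (intro marg_simplex) (simp add: policies_def)
  have ne: "(\<lambda>x. (\<chi> z. 1 / real CARD('z))) \<in> (int_families :: ('x \<Rightarrow> real^'z) set)"
    by (simp add: int_families_def prob_simplex_int_def)
  have le: "Gobj \<rho> E \<pi>0 \<beta> R \<pi> q \<le> Jobj \<rho> E \<pi>0 \<beta> R \<pi>" for q
    unfolding G_rewrite Jobj_def
    by (intro sum_mono mult_left_mono) (use hq_le[OF cv lsc nus] rho_nonneg in auto)
  have bdd: "bdd_above ((\<lambda>q. Gobj \<rho> E \<pi>0 \<beta> R \<pi> q) ` int_families)"
    using le by (intro bdd_aboveI2) auto
  show ?thesis
  proof (rule antisym)
    show "Jobj \<rho> E \<pi>0 \<beta> R \<pi> \<le> (SUP q\<in>int_families. Gobj \<rho> E \<pi>0 \<beta> R \<pi> q)"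
    proof (rule field_le_epsilon)
      fix e :: real assume e: "e > 0"
      have "\<forall>x. \<exists>q\<in>prob_simplex_int. hq R \<beta> (marginal E (\<pi> x)) q > R (marginal E (\<pi> x)) - e"
        using hq_approx[OF cv lsc nus e beta_pos] by blast
      then obtain Q where Q: "\<And>x. Q x \<in> prob_simplex_int"
        "\<And>x. hq R \<beta> (marginal E (\<pi> x)) (Q x) > R (marginal E (\<pi> x)) - e"
        by metis
      have Qi: "Q \<in> int_families" using Q(1) by (simp add: int_families_def)
      have "Jobj \<rho> E \<pi>0 \<beta> R \<pi> - e = (\<Sum>x\<in>UNIV. \<rho> x * (R (marginal E (\<pi> x)) + \<beta> * KL (\<pi> x) (\<pi>0 x) - e))"
        unfolding Jobj_def using rho_sum by (simp add: algebra_simps sum_subtractf flip: sum_distrib_left)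
      also have "\<dots> \<le> Gobj \<rho> E \<pi>0 \<beta> R \<pi> Q"
        unfolding G_rewrite
        by (intro sum_mono mult_left_mono) (use Q(2) rho_nonneg less_imp_le in auto)
      also have "\<dots> \<le> (SUP q\<in>int_families. Gobj \<rho> E \<pi>0 \<beta> R \<pi> q)"
        by (rule cSUP_upper[OF Qi bdd])
      finally show "Jobj \<rho> E \<pi>0 \<beta> R \<pi> \<le> (SUP q\<in>int_families. Gobj \<rho> E \<pi>0 \<beta> R \<pi> q) + e"
        by simp
    qed
  next
    show "(SUP q\<in>int_families. Gobj \<rho> E \<pi>0 \<beta> R \<pi> q) \<le> Jobj \<rho> E \<pi>0 \<beta> R \<pi>"
      using ne le by (intro cSUP_least) auto
  qed
qed


theorem theorem1:
  fixes \<rho> :: "'x::finite \<Rightarrow> real"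
    and E :: "'y::finite \<Rightarrow> 'z::finite"
    and \<pi>0 :: "'x \<Rightarrow> real ^ 'y"
    and \<beta> :: real
    and R :: "real ^ 'z \<Rightarrow> real"
  assumes rho_nonneg: "\<forall>x. \<rho> x \<ge> 0"
    and rho_sum: "(\<Sum>x\<in>UNIV. \<rho> x) = 1"
    and pi0_pol: "\<pi>0 \<in> policies"
    and pi0_pos: "\<forall>x y. \<pi>0 x $ y > 0"
    and beta_pos: "\<beta> > 0"
    and R_convex: "convex_on prob_simplex R"
    and R_lsc: "lsc_on prob_simplex R"
  shows
    "(\<forall>\<pi>\<in>policies. Jobj \<rho> E \<pi>0 \<beta> R \<pi> = (SUP q\<in>int_families. Gobj \<rho> E \<pi>0 \<beta> R \<pi> q))
     \<and> (\<forall>PP. PP \<noteq> {} \<and> PP \<subseteq> policies \<longrightarrow>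
          (INF \<pi>\<in>PP. Jobj \<rho> E \<pi>0 \<beta> R \<pi>)
          = (INF \<pi>\<in>PP. SUP q\<in>int_families. Gobj \<rho> E \<pi>0 \<beta> R \<pi> q))
     \<and> (\<forall>q\<in>int_families.
          (\<exists>\<kappa>. \<forall>\<pi>\<in>policies. Gobj \<rho> E \<pi>0 \<beta> R \<pi> q
                 = \<beta> * (\<Sum>x\<in>UNIV. \<rho> x * KL (\<pi> x) (qtilde E \<pi>0 q x)) + \<kappa>)
          \<and> qtilde E \<pi>0 q \<in> policies
          \<and> (\<forall>\<pi>\<in>policies. Gobj \<rho> E \<pi>0 \<beta> R (qtilde E \<pi>0 q) q \<le> Gobj \<rho> E \<pi>0 \<beta> R \<pi> q)
          \<and> (\<forall>\<pi>\<in>policies. Gobj \<rho> E \<pi>0 \<beta> R \<pi> q = Gobj \<rho> E \<pi>0 \<beta> R (qtilde E \<pi>0 q) q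
                 \<longrightarrow> (\<forall>x. \<rho> x > 0 \<longrightarrow> \<pi> x = qtilde E \<pi>0 q x)))"
proof (intro conjI ballI allI impI)
  note P1 = part1[OF rho_nonneg rho_sum beta_pos R_convex R_lsc]
  show "Jobj \<rho> E \<pi>0 \<beta> R \<pi> = (SUP q\<in>int_families. Gobj \<rho> E \<pi>0 \<beta> R \<pi> q)"
    if "\<pi> \<in> policies" for \<pi> using P1[OF that] .
  show "(INF \<pi>\<in>PP. Jobj \<rho> E \<pi>0 \<beta> R \<pi>) = (INF \<pi>\<in>PP. SUP q\<in>int_families. Gobj \<rho> E \<pi>0 \<beta> R \<pi> q)"
    if "PP \<noteq> {} \<and> PP \<subseteq> policies" for PP
    using that P1 by (intro INF_cong) auto
next
  fix q :: "'x \<Rightarrow> real^'z" assume q: "q \<in> int_families"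
  have qx: "q x \<in> prob_simplex_int" for x using q by (simp add: int_families_def)
  have p0: "\<forall>y. \<pi>0 x $ y > 0" for x using pi0_pos by simp
  define C where "C x = (\<Sum>y\<in>UNIV. \<pi>0 x $ y * q x $ E y)" for x
  define \<kappa> where "\<kappa> = (\<Sum>x\<in>UNIV. \<rho> x * (- \<beta> * ln (C x) - Psi \<beta> R (q x)))"
  have decomp: "Gobj \<rho> E \<pi>0 \<beta> R \<pi> q = \<beta> * (\<Sum>x\<in>UNIV. \<rho> x * KL (\<pi> x) (qtilde E \<pi>0 q x)) + \<kappa>"
    if pi: "\<pi> \<in> policies" for \<pi>
  proof -
    have "Gobj \<rho> E \<pi>0 \<beta> R \<pi> q = (\<Sum>x\<in>UNIV. \<beta> * (\<rho> x * KL (\<pi> x) (qtilde E \<pi>0 q x)) + \<rho> x * (- \<beta> * ln (C x) - Psi \<beta> R (q x)))"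
      unfolding Gobj_def
    proof (rule sum.cong[OF refl])
      fix x
      have "\<pi> x \<in> prob_simplex" using pi by (simp add: policies_def)
      from KL_tilt[of "\<pi> x" \<pi>0 x q E, OF this p0 qx]
      have "KL (\<pi> x) (\<pi>0 x) - (\<Sum>y\<in>UNIV. \<pi> x $ y * ln (q x $ E y)) = KL (\<pi> x) (qtilde E \<pi>0 q x) - ln (C x)"
        by (simp add: C_def)
      then have "\<beta> * KL (\<pi> x) (\<pi>0 x) - \<beta> * (\<Sum>y\<in>UNIV. \<pi> x $ y * ln (q x $ E y)) = \<beta> * KL (\<pi> x) (qtilde E \<pi>0 q x) - \<beta> * ln (C x)"
        by (metis right_diff_distrib)
      then have "\<rho> x * (\<beta> * KL (\<pi> x) (\<pi>0 x) - \<beta> * (\<Sum>y\<in>UNIV. \<pi> x $ y * ln (q x $ E y)) - Psi \<beta> R (q x))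
          = \<rho> x * ((\<beta> * KL (\<pi> x) (qtilde E \<pi>0 q x) - \<beta> * ln (C x)) - Psi \<beta> R (q x))"
        by (simp only:)
      then show "\<rho> x * (\<beta> * KL (\<pi> x) (\<pi>0 x) - \<beta> * (\<Sum>y\<in>UNIV. \<pi> x $ y * ln (q x $ E y)) - Psi \<beta> R (q x)) =
          \<beta> * (\<rho> x * KL (\<pi> x) (qtilde E \<pi>0 q x)) + \<rho> x * (- \<beta> * ln (C x) - Psi \<beta> R (q x))"
        by (simp add: algebra_simps)
    qed
    also have "\<dots> = \<beta> * (\<Sum>x\<in>UNIV. \<rho> x * KL (\<pi> x) (qtilde E \<pi>0 q x)) + \<kappa>"
      by (simp add: \<kappa>_def sum.distrib sum_distrib_left)
    finally show ?thesis .
  qed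
  then show "\<exists>\<kappa>. \<forall>\<pi>\<in>policies. Gobj \<rho> E \<pi>0 \<beta> R \<pi> q = \<beta> * (\<Sum>x\<in>UNIV. \<rho> x * KL (\<pi> x) (qtilde E \<pi>0 q x)) + \<kappa>"
    by blast
  have qts: "qtilde E \<pi>0 q x \<in> prob_simplex" for x using qtilde_props(3)[of \<pi>0 x q E, OF p0 qx] .
  have qtp: "\<forall>y. qtilde E \<pi>0 q x $ y > 0" for x using qtilde_props(2)[of \<pi>0 x q E, OF p0 qx] .
  show qtpol: "qtilde E \<pi>0 q \<in> policies" using qts by (simp add: policies_def)
  have Gq: "Gobj \<rho> E \<pi>0 \<beta> R (qtilde E \<pi>0 q) q = \<kappa>"
    using decomp[OF qtpol] by (simp add: KL_self)
  have KLnn: "\<rho> x * KL (\<pi> x) (qtilde E \<pi>0 q x) \<ge> 0" if "\<pi> \<in> policies" for \<pi> x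
    using KL_gibbs[OF _ qts qtp, of "\<pi> x"] that rho_nonneg by (simp add: policies_def)
  show "Gobj \<rho> E \<pi>0 \<beta> R (qtilde E \<pi>0 q) q \<le> Gobj \<rho> E \<pi>0 \<beta> R \<pi> q" if "\<pi> \<in> policies" for \<pi>
    unfolding Gq decomp[OF that] using KLnn[OF that] beta_pos
    by (simp add: sum_nonneg)
  fix \<pi> x assume pi: "\<pi> \<in> policies"
    and eq: "Gobj \<rho> E \<pi>0 \<beta> R \<pi> q = Gobj \<rho> E \<pi>0 \<beta> R (qtilde E \<pi>0 q) q" and rx: "\<rho> x > 0"
  have "\<beta> * (\<Sum>x\<in>UNIV. \<rho> x * KL (\<pi> x) (qtilde E \<pi>0 q x)) = 0"
    using eq unfolding Gq decomp[OF pi] by simp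
  then have "(\<Sum>x\<in>UNIV. \<rho> x * KL (\<pi> x) (qtilde E \<pi>0 q x)) = 0" using beta_pos by simp
  then have "\<rho> x * KL (\<pi> x) (qtilde E \<pi>0 q x) = 0"
    using KLnn[OF pi] by (simp add: sum_nonneg_eq_0_iff)
  then have "KL (\<pi> x) (qtilde E \<pi>0 q x) = 0" using rx by simp
  then show "\<pi> x = qtilde E \<pi>0 q x"
    using KL_gibbs[OF _ qts qtp, of "\<pi> x"] pi by (simp add: policies_def)
qed

end
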